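(* Let $P(\lambda)=\sum_{j=0}^m A_j\lambda^j$ and $\Delta(\lambda)=\sum_{j=0}^m\Delta_j\lambda^j$ be $n\times n$ complex matrix polynomials, and let $\mu_1\neq\mu_2$ be complex numbers. If $\mu_1$ and $\mu_2$ are both eigenvalues of $Q(\lambda)=P(\lambda)+\Delta(\lambda)$, then for every $\gamma\neq 0$, $$ s_{2n-1}\big(F[P(\mu_1,\mu_2);\gamma]\big)\le \big\|F[\Delta(\mu_1,\mu_2);\gamma]\big\|. $$
   Context: For an $n\times n$ matrix polynomial $R(\lambda)$, distinct $\mu_1,\mu_2\in\mathbb{C}$ and $\gamma\in\mathbb{C}$, define the divided difference $R[\mu_1,\mu_2]=\frac{R(\mu_1)-R(\mu_2)}{\mu_1-\mu_2}$ and the $2n\times 2n$ matrix $F[R(\mu_1,\mu_2);\gamma]=\begin{bmatrix} R(\mu_1) & 0\\ \gamma R[\mu_1,\mu_2] & R(\mu_2)\end{bmatrix}$. For a matrix $M\in\mathbb{C}^{2n\times 2n}$, $s_1(M)\ge s_2(M)\ge\dots\ge s_{2n}(M)$ denote its singular values, so $s_{2n-1}$ is the second smallest. $\|\cdot\|$ is the spectral norm. A scalar $\lambda_0$ is an eigenvalue of a matrix polynomial $Q$ if $Q(\lambda_0)x=0$ for some nonzero $x\in\mathbb{C}^n$. *)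

theory Defs
  imports "Jordan_Normal_Form.Char_Poly" "HOL-Computational_Algebra.Polynomial"
begin

definition mpoly_eval :: "nat \<Rightarrow> nat \<Rightarrow> (nat \<Rightarrow> complex mat) \<Rightarrow> complex \<Rightarrow> complex mat" where
  "mpoly_eval n m C lam = mat n n (\<lambda>(i,k). \<Sum>j\<le>m. (C j) $$ (i,k) * lam ^ j)"

definition divdiff :: "(complex \<Rightarrow> complex mat) \<Rightarrow> complex \<Rightarrow> complex \<Rightarrow> complex mat" where
  "divdiff R mu1 mu2 = (1 / (mu1 - mu2)) \<cdot>\<^sub>m (R mu1 - R mu2)"

definition Fmat :: "nat \<Rightarrow> (complex \<Rightarrow> complex mat) \<Rightarrow> complex \<Rightarrow> complex \<Rightarrow> complex \<Rightarrow> complex mat" where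
  "Fmat n R mu1 mu2 gamma =
     four_block_mat (R mu1) (0\<^sub>m n n) (gamma \<cdot>\<^sub>m divdiff R mu1 mu2) (R mu2)"

definition cadj :: "complex mat \<Rightarrow> complex mat" where
  "cadj M = mat (dim_col M) (dim_row M) (\<lambda>(i,j). cnj (M $$ (j,i)))"

definition sing_vals :: "complex mat \<Rightarrow> real list" where
  "sing_vals M = rev (sorted_list_of_multiset
      (image_mset (\<lambda>z. sqrt (Re z)) (proots (char_poly (cadj M * M)))))"

definition sval :: "nat \<Rightarrow> complex mat \<Rightarrow> real" where
  "sval k M = sing_vals M ! (k - 1)"

definition vnorm2 :: "complex vec \<Rightarrow> real" where
  "vnorm2 x = sqrt (\<Sum>i<dim_vec x. (cmod (x $ i))\<^sup>2)"

definition spec_norm :: "complex mat \<Rightarrow> real" where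
  "spec_norm M = Sup {vnorm2 (M *\<^sub>v x) | x. x \<in> carrier_vec (dim_col M) \<and> vnorm2 x = 1}"

definition is_mp_eigenvalue :: "nat \<Rightarrow> (complex \<Rightarrow> complex mat) \<Rightarrow> complex \<Rightarrow> bool" where
  "is_mp_eigenvalue n Q lam0 \<longleftrightarrow>
     (\<exists>x. x \<in> carrier_vec n \<and> x \<noteq> 0\<^sub>v n \<and> Q lam0 *\<^sub>v x = 0\<^sub>v n)"

end

theory Submission imports Defs "Jordan_Normal_Form.Schur_Decomposition" begin


lemma cadj_dims[simp]: "dim_row (cadj A) = dim_col A" "dim_col (cadj A) = dim_row A"
  unfolding cadj_def by simp_all
lemma cadj_carrier[simp]: "A \<in> carrier_mat r c \<Longrightarrow> cadj A \<in> carrier_mat c r"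
  unfolding carrier_mat_def by simp
lemma index_cadj[simp]: "i < dim_col A \<Longrightarrow> j < dim_row A \<Longrightarrow> cadj A $$ (i,j) = cnj (A $$ (j,i))"
  unfolding cadj_def by simp
lemma cadj_cadj[simp]: "cadj (cadj A) = A"
  by (rule eq_matI, auto)
lemma cadj_one[simp]: "cadj (1\<^sub>m n) = 1\<^sub>m n"
  by (rule eq_matI, auto)
lemma cadj_zero[simp]: "cadj (0\<^sub>m r c) = 0\<^sub>m c r"
  by (rule eq_matI, auto)

lemma cadj_mult: assumes A: "A \<in> carrier_mat r k" and B: "B \<in> carrier_mat k c"
  shows "cadj (A * B) = cadj B * cadj A"
proof (rule eq_matI)
  fix i j assume i: "i < dim_row (cadj B * cadj A)" and j: "j < dim_col (cadj B * cadj A)"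
  from i j A B have ic: "i < c" and jr: "j < r" by auto
  have "cadj (A * B) $$ (i,j) = cnj (\<Sum>l\<in>{0..<k}. A $$ (j,l) * B $$ (l,i))"
    using ic jr A B by (simp add: scalar_prod_def)
  also have "\<dots> = (\<Sum>l\<in>{0..<k}. cnj (B $$ (l,i)) * cnj (A $$ (j,l)))"
    by (simp add: cnj_sum mult.commute)
  also have "\<dots> = (cadj B * cadj A) $$ (i,j)"
    using ic jr A B by (simp add: scalar_prod_def)
  finally show "cadj (A * B) $$ (i,j) = (cadj B * cadj A) $$ (i,j)" .
qed (insert A B, auto)

lemma cadj_inner: assumes "M \<in> carrier_mat r c" "x \<in> carrier_vec c" "y \<in> carrier_vec r"
  shows "(M *\<^sub>v x) \<bullet>c y = x \<bullet>c (cadj M *\<^sub>v y)"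
proof -
  have "(M *\<^sub>v x) \<bullet>c y = (\<Sum>i\<in>{0..<r}. (\<Sum>j\<in>{0..<c}. M $$ (i,j) * x $ j) * cnj (y $ i))"
    using assms by (simp add: scalar_prod_def)
  also have "\<dots> = (\<Sum>i\<in>{0..<r}. \<Sum>j\<in>{0..<c}. M $$ (i,j) * x $ j * cnj (y $ i))"
    by (simp add: sum_distrib_right)
  also have "\<dots> = (\<Sum>j\<in>{0..<c}. \<Sum>i\<in>{0..<r}. M $$ (i,j) * x $ j * cnj (y $ i))"
    by (rule sum.swap)
  also have "\<dots> = (\<Sum>j\<in>{0..<c}. x $ j * cnj (\<Sum>i\<in>{0..<r}. cnj (M $$ (i,j)) * y $ i))"
    by (simp add: cnj_sum sum_distrib_left mult.commute mult.left_commute)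
  also have "\<dots> = x \<bullet>c (cadj M *\<^sub>v y)"
    using assms by (simp add: scalar_prod_def)
  finally show ?thesis .
qed

lemma cadj_four_block: assumes "A \<in> carrier_mat r1 c1" "B \<in> carrier_mat r1 c2"
   "C \<in> carrier_mat r2 c1" "D \<in> carrier_mat r2 c2"
  shows "cadj (four_block_mat A B C D) = four_block_mat (cadj A) (cadj C) (cadj B) (cadj D)"
  by (rule eq_matI, insert assms, auto)

lemma cinner_smult: assumes "x \<in> carrier_vec n" "y \<in> carrier_vec n"
  shows "(a \<cdot>\<^sub>v x) \<bullet>c (b \<cdot>\<^sub>v y) = a * cnj b * (x \<bullet>c y)"
  using assms by (simp add: scalar_prod_def sum_distrib_left algebra_simps)

lemma cinner_self: fixes w :: "complex vec"
  shows "w \<bullet>c w = complex_of_real (Re (w \<bullet>c w))" "Re (w \<bullet>c w) \<ge> 0"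
proof -
  have "0 \<le> w \<bullet>c w" by (rule conjugate_square_ge_0_vec)
  thus "w \<bullet>c w = complex_of_real (Re (w \<bullet>c w))" "Re (w \<bullet>c w) \<ge> 0"
    by (auto simp: less_eq_complex_def complex_eq_iff)
qed

definition nrm :: "complex vec \<Rightarrow> complex vec" where
  "nrm w = (1 / complex_of_real (sqrt (Re (w \<bullet>c w)))) \<cdot>\<^sub>v w"

lemma nrm_carrier[simp]: "w \<in> carrier_vec n \<Longrightarrow> nrm w \<in> carrier_vec n"
  by (simp add: nrm_def)

lemma nrm_unit: assumes w: "w \<in> carrier_vec n" and w0: "w \<noteq> 0\<^sub>v n"
  shows "nrm w \<bullet>c nrm w = 1"
proof -
  define R where "R = Re (w \<bullet>c w)"
  have ww: "w \<bullet>c w = complex_of_real R" unfolding R_def by (rule cinner_self)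
  have "w \<bullet>c w \<noteq> 0" using w w0 by simp
  hence "R \<noteq> 0" using ww by auto
  moreover have "R \<ge> 0" unfolding R_def by (rule cinner_self)
  ultimately have Rpos: "R > 0" by simp
  have "nrm w \<bullet>c nrm w = (1 / complex_of_real (sqrt R)) * cnj (1 / complex_of_real (sqrt R)) * complex_of_real R"
    unfolding nrm_def R_def[symmetric] ww[symmetric] by (rule cinner_smult[OF w w])
  also have "\<dots> = complex_of_real (R / (sqrt R * sqrt R))"
    using Rpos by (simp add: divide_simps flip: of_real_mult)
  also have "\<dots> = 1" using Rpos by simp
  finally show ?thesis .
qed

lemma nrm_id: assumes "w \<bullet>c w = 1" shows "nrm w = w"
  unfolding nrm_def assms by simp

lemma nrm_orth: assumes "x \<in> carrier_vec n" "y \<in> carrier_vec n" "x \<bullet>c y = 0"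
  shows "nrm x \<bullet>c nrm y = 0"
  unfolding nrm_def using cinner_smult[OF assms(1,2)] assms(3) by simp

lemma cadj_mult_entry: assumes "W \<in> carrier_mat m n" "i < n" "j < n"
  shows "(cadj W * W) $$ (i,j) = col W j \<bullet>c col W i"
  using assms by (simp add: scalar_prod_def mult.commute)

lemma unitary_ext: assumes v: "v \<in> carrier_vec n" and vv: "v \<bullet>c v = 1"
  shows "\<exists>W. W \<in> carrier_mat n n \<and> cadj W * W = 1\<^sub>m n \<and> col W 0 = v"
proof -
  have v0: "v \<noteq> 0\<^sub>v n" using vv v by auto
  have n: "n \<noteq> 0"
  proof
    assume "n = 0"
    hence "v = 0\<^sub>v n" using v by (intro eq_vecI) auto
    with v0 show False by simp
  qed
  interpret cof_vec_space n "TYPE(complex)" .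
  define b where "b = basis_completion v"
  from basis_completion[OF v v0, folded b_def]
  have span_b: "span (set b) = carrier_vec n" and dist_b: "distinct b" 
    and indep: "\<not> lin_dep (set b)" and b: "set b \<subseteq> carrier_vec n" and hdb: "hd b = v" 
    and len_b: "length b = n" by auto
  from hdb len_b n obtain vs where bv: "b = v # vs" by (cases b, auto)
  define ws where "ws = gram_schmidt n b"
  from gram_schmidt_result[OF b dist_b indep refl, folded ws_def]
  have ws: "set ws \<subseteq> carrier_vec n" "corthogonal ws" "length ws = n" 
    by (auto simp: len_b)
  from gram_schmidt_hd[OF v, of vs, folded bv] have hdws: "hd ws = v" unfolding ws_def .
  define ws' where "ws' = map nrm ws"
  define W where "W = mat_of_cols n ws'"
  have len': "length ws' = n" using ws unfolding ws'_def by simp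
  have wsc: "\<And>i. i < n \<Longrightarrow> ws ! i \<in> carrier_vec n" using ws by auto
  have wsc': "\<And>i. i < n \<Longrightarrow> ws' ! i \<in> carrier_vec n" using wsc ws unfolding ws'_def by auto
  have ws0: "\<And>i. i < n \<Longrightarrow> ws ! i \<noteq> 0\<^sub>v n"
  proof
    fix i assume i: "i < n" and z: "ws ! i = 0\<^sub>v n"
    have "ws ! i \<bullet>c ws ! i = 0" using z by simp
    with corthogonalD[OF ws(2)] i ws(3) show False by auto
  qed
  have orth: "\<And>i j. i < n \<Longrightarrow> j < n \<Longrightarrow> ws' ! j \<bullet>c ws' ! i = (if i = j then 1 else 0)"
  proof -
    fix i j assume i: "i < n" and j: "j < n"
    show "ws' ! j \<bullet>c ws' ! i = (if i = j then 1 else 0)"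
    proof (cases "i = j")
      case True
      thus ?thesis using nrm_unit[OF wsc[OF i] ws0[OF i]] i ws(3) unfolding ws'_def by simp
    next
      case False
      have "ws ! j \<bullet>c ws ! i = 0" using corthogonalD[OF ws(2)] i j ws(3) False by auto
      from nrm_orth[OF wsc[OF j] wsc[OF i] this] show ?thesis using False i j ws(3) unfolding ws'_def by simp
    qed
  qed
  have W: "W \<in> carrier_mat n n" unfolding W_def using len' by (metis mat_of_cols_carrier(1))
  have colW: "\<And>i. i < n \<Longrightarrow> col W i = ws' ! i" unfolding W_def using len' wsc' by simp
  have "cadj W * W = 1\<^sub>m n"
  proof (rule eq_matI)
    fix i j assume "i < dim_row (1\<^sub>m n)" "j < dim_col (1\<^sub>m n)"
    hence i: "i < n" and j: "j < n" by auto
    show "(cadj W * W) $$ (i,j) = 1\<^sub>m n $$ (i,j)"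
      unfolding cadj_mult_entry[OF W i j] colW[OF i] colW[OF j] orth[OF i j] using i j by simp
  qed (insert W, auto)
  moreover have "col W 0 = v"
  proof -
    have "ws ! 0 = v" using hdws n ws(3) by (cases ws, auto)
    thus ?thesis using colW[of 0] n nrm_id[OF vv] unfolding ws'_def using ws(3) by simp
  qed
  ultimately show ?thesis using W by blast
qed

lemma unitary_right: assumes "W \<in> carrier_mat n n" "cadj W * W = 1\<^sub>m n"
  shows "W * cadj W = 1\<^sub>m n"
  using mat_mult_left_right_inverse[of "cadj W" n W] assms by auto

lemma hermitian_spectral:
  "A \<in> carrier_mat n n \<Longrightarrow> cadj A = A \<Longrightarrow>
   \<exists>U D. U \<in> carrier_mat n n \<and> D \<in> carrier_mat n n \<and> diagonal_mat D \<and>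
     cadj U * U = 1\<^sub>m n \<and> A = U * D * cadj U"
proof (induction n arbitrary: A)
  case 0
  hence A: "A \<in> carrier_mat 0 0" by simp
  have "A = 1\<^sub>m 0 * A * cadj (1\<^sub>m 0)" using A by simp
  moreover have "diagonal_mat A" using A unfolding diagonal_mat_def by auto
  ultimately show ?case using A by (intro exI[of _ "1\<^sub>m 0"] exI[of _ A]) auto
next
  case (Suc k A)
  let ?n = "Suc k"
  have A: "A \<in> carrier_mat ?n ?n" and herm: "cadj A = A" by fact+
  from char_poly_factorized[OF A] obtain as where cp: "char_poly A = (\<Prod>a\<leftarrow>as. [:- a, 1:])"
    and las: "length as = ?n" by auto
  then obtain e es where as: "as = e # es" by (cases as) auto
  have "poly (char_poly A) e = 0" unfolding cp as by simp
  hence ev: "eigenvalue A e" using eigenvalue_root_char_poly[OF A] by simp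
  from find_eigenvector[OF A ev] A
  have v0c: "find_eigenvector A e \<in> carrier_vec ?n" and v00: "find_eigenvector A e \<noteq> 0\<^sub>v ?n"
    and Av0: "A *\<^sub>v find_eigenvector A e = e \<cdot>\<^sub>v find_eigenvector A e"
    unfolding eigenvector_def by auto
  define v where "v = nrm (find_eigenvector A e)"
  have v: "v \<in> carrier_vec ?n" unfolding v_def using v0c by simp
  have vv: "v \<bullet>c v = 1" unfolding v_def by (rule nrm_unit[OF v0c v00])
  have Av: "A *\<^sub>v v = e \<cdot>\<^sub>v v"
    unfolding v_def nrm_def using Av0 v0c A
    by (simp add: mult_mat_vec[OF A v0c] smult_smult_assoc mult.commute)
  from unitary_ext[OF v vv] obtain W where W: "W \<in> carrier_mat ?n ?n"
    and WW: "cadj W * W = 1\<^sub>m ?n" and colW: "col W 0 = v" by auto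
  have WW': "W * cadj W = 1\<^sub>m ?n" by (rule unitary_right[OF W WW])
  define A' where "A' = cadj W * A * W"
  have A': "A' \<in> carrier_mat ?n ?n" unfolding A'_def using W A by auto
  have hA': "cadj A' = A'"
    unfolding A'_def using W A herm
    by (simp add: cadj_mult[of _ ?n ?n _ ?n] assoc_mult_mat[of _ ?n ?n _ ?n _ ?n])
  have colA': "col A' 0 = e \<cdot>\<^sub>v unit_vec ?n 0"
  proof -
    have "col A' 0 = (cadj W * A) *\<^sub>v col W 0" unfolding A'_def
      by (rule col_mult2[of _ ?n ?n], insert W A, auto)
    also have "\<dots> = cadj W *\<^sub>v (e \<cdot>\<^sub>v v)" unfolding colW using W A v Av by (simp add: assoc_mult_mat_vec[of _ ?n ?n _ ?n])
    also have "\<dots> = e \<cdot>\<^sub>v (cadj W *\<^sub>v col W 0)" unfolding colW by (rule mult_mat_vec[of _ ?n ?n], insert W v, auto)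
    also have "cadj W *\<^sub>v col W 0 = col (cadj W * W) 0"
      by (rule col_mult2[symmetric, of _ ?n ?n], insert W, auto)
    also have "\<dots> = unit_vec ?n 0" unfolding WW by simp
    finally show ?thesis .
  qed
  have A'col: "\<And>i. i < ?n \<Longrightarrow> A' $$ (i,0) = (if i = 0 then e else 0)"
  proof -
    fix i assume i: "i < ?n"
    have "A' $$ (i,0) = col A' 0 $ i" using A' i by simp
    thus "A' $$ (i,0) = (if i = 0 then e else 0)" unfolding colA' using i by simp
  qed
  have A'row: "\<And>j. j < ?n \<Longrightarrow> A' $$ (0,j) = (if j = 0 then e else 0)"
  proof -
    fix j assume j: "j < ?n"
    have "A' $$ (0,j) = cadj A' $$ (0,j)" using hA' by simp
    also have "\<dots> = cnj (A' $$ (j,0))" using A' j by simp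
    finally have *: "A' $$ (0,j) = cnj (A' $$ (j,0))" .
    show "A' $$ (0,j) = (if j = 0 then e else 0)"
    proof (cases "j = 0")
      case True
      with * A'col[of 0] have "e = cnj e" by simp
      thus ?thesis using A'col[of 0] True by simp
    next
      case False thus ?thesis using * A'col[OF j] by simp
    qed
  qed
  define E where "E = mat 1 1 (\<lambda>_. e)"
  define A3 where "A3 = mat k k (\<lambda>(i,j). A' $$ (Suc i, Suc j))"
  have A3: "A3 \<in> carrier_mat k k" unfolding A3_def by simp
  have E: "E \<in> carrier_mat 1 1" unfolding E_def by simp
  have A'blk: "A' = four_block_mat E (0\<^sub>m 1 k) (0\<^sub>m k 1) A3"
  proof (rule eq_matI)
    fix i j assume i: "i < dim_row (four_block_mat E (0\<^sub>m 1 k) (0\<^sub>m k 1) A3)"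
      and j: "j < dim_col (four_block_mat E (0\<^sub>m 1 k) (0\<^sub>m k 1) A3)"
    hence i': "i < ?n" and j': "j < ?n" using E A3 by auto
    show "A' $$ (i,j) = four_block_mat E (0\<^sub>m 1 k) (0\<^sub>m k 1) A3 $$ (i,j)"
      using i' j' A'col A'row E A3
      by (cases i; cases j) (auto simp: E_def A3_def)
  qed (insert A' E A3, auto)
  have hA3: "cadj A3 = A3"
  proof (rule eq_matI)
    fix i j assume "i < dim_row A3" "j < dim_col A3"
    hence i: "i < k" and j: "j < k" using A3 by auto
    have "cadj A' $$ (Suc i, Suc j) = A' $$ (Suc i, Suc j)" using hA' by simp
    thus "cadj A3 $$ (i,j) = A3 $$ (i,j)" using i j A' unfolding A3_def by simp
  qed (insert A3, auto)
  from Suc.IH[OF A3 hA3] obtain U3 D3 where U3: "U3 \<in> carrier_mat k k" and D3: "D3 \<in> carrier_mat k k"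
    and dD3: "diagonal_mat D3" and UU3: "cadj U3 * U3 = 1\<^sub>m k" and A3eq: "A3 = U3 * D3 * cadj U3" by auto
  define B where "B = four_block_mat (1\<^sub>m 1) (0\<^sub>m 1 k) (0\<^sub>m k 1) U3"
  define D where "D = four_block_mat E (0\<^sub>m 1 k) (0\<^sub>m k 1) D3"
  have B: "B \<in> carrier_mat ?n ?n" unfolding B_def using U3 by (metis four_block_carrier_mat one_carrier_mat plus_1_eq_Suc)
  have D: "D \<in> carrier_mat ?n ?n" unfolding D_def using D3 E by (metis four_block_carrier_mat plus_1_eq_Suc)
  have cB: "cadj B = four_block_mat (1\<^sub>m 1) (0\<^sub>m 1 k) (0\<^sub>m k 1) (cadj U3)"
    unfolding B_def using U3 by (subst cadj_four_block[of _ 1 1 _ k _ k]) auto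
  have BB: "cadj B * B = 1\<^sub>m ?n"
    unfolding cB unfolding B_def using U3 UU3
    by (subst mult_four_block_mat[of _ 1 1 _ k _ k]) auto
  have BDB: "B * D * cadj B = A'"
  proof -
    have s1: "four_block_mat (1\<^sub>m 1) (0\<^sub>m 1 k) (0\<^sub>m k 1) U3 * four_block_mat E (0\<^sub>m 1 k) (0\<^sub>m k 1) D3
      = four_block_mat E (0\<^sub>m 1 k) (0\<^sub>m k 1) (U3 * D3)"
      by (subst mult_four_block_mat[of _ 1 1 _ k _ k], insert U3 D3 E, auto)
    have s2: "four_block_mat E (0\<^sub>m 1 k) (0\<^sub>m k 1) (U3 * D3) * four_block_mat (1\<^sub>m 1) (0\<^sub>m 1 k) (0\<^sub>m k 1) (cadj U3)
      = four_block_mat E (0\<^sub>m 1 k) (0\<^sub>m k 1) (U3 * D3 * cadj U3)"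
      by (subst mult_four_block_mat[of _ 1 1 _ k _ k], insert U3 D3 E, auto)
    show ?thesis unfolding cB A'blk unfolding B_def D_def A3eq s1 s2 ..
  qed
  define U where "U = W * B"
  have U: "U \<in> carrier_mat ?n ?n" unfolding U_def using W B by simp
  have cW: "cadj W \<in> carrier_mat ?n ?n" "cadj B \<in> carrier_mat ?n ?n" using W B by auto
  have "cadj U * U = cadj B * cadj W * (W * B)"
    unfolding U_def by (simp add: cadj_mult[OF W B])
  also have "\<dots> = cadj B * (cadj W * (W * B))" by (rule assoc_mult_mat[OF cW(2) cW(1) mult_carrier_mat[OF W B]])
  also have "cadj W * (W * B) = (cadj W * W) * B" by (rule assoc_mult_mat[OF cW(1) W B, symmetric])
  finally have UU: "cadj U * U = 1\<^sub>m ?n" using BB B unfolding WW by simp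
  have mc: "\<And>X Y. X \<in> carrier_mat ?n ?n \<Longrightarrow> Y \<in> carrier_mat ?n ?n \<Longrightarrow> X * Y \<in> carrier_mat ?n ?n"
    by simp
  have "U * D * cadj U = W * (B * D * cadj B) * cadj W"
    unfolding U_def using W B D cW by (simp add: cadj_mult[OF W B] assoc_mult_mat[of _ ?n ?n _ ?n _ ?n] mc)
  also have "\<dots> = (W * cadj W) * A * (W * cadj W)" unfolding BDB A'_def using W A cW
    by (simp add: assoc_mult_mat[of _ ?n ?n _ ?n _ ?n] mc)
  also have "\<dots> = A" unfolding WW' using A by simp
  finally have AU: "A = U * D * cadj U" ..
  have dD: "diagonal_mat D" unfolding diagonal_mat_def D_def
    using dD3 E D3 unfolding diagonal_mat_def E_def by auto
  show ?case using U D dD UU AU by blast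
qed


lemma proots_linear_prod: "proots (\<Prod>a\<leftarrow>xs. [:- a, 1:]) = mset (xs :: complex list)"
proof (induction xs)
  case Nil thus ?case by simp
next
  case (Cons a xs)
  have nz: "(\<Prod>a\<leftarrow>xs. [:- a, 1:]) \<noteq> (0 :: complex poly)"
    by (auto simp: prod_list_zero_iff)
  have eq: "(\<Prod>x\<leftarrow>a # xs. [:- x, 1:]) = [:- a, 1:] * (\<Prod>x\<leftarrow>xs. [:- x, 1:])"
    by (simp only: list.map prod_list.Cons)
  have "proots ([:- a, 1:] * (\<Prod>x\<leftarrow>xs. [:- x, 1:])) = proots [:- a, 1:] + proots (\<Prod>x\<leftarrow>xs. [:- x, 1:])"
    by (rule proots_mult) (use nz in auto)
  thus ?case unfolding eq Cons.IH proots_linear_factor by simp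
qed

lemma list_second:
  fixes L :: "real list"
  assumes len: "length L = N" and N: "2 \<le> N" and gt: "sort L ! 1 > c"
  shows "\<exists>k<N. \<forall>i<N. i \<noteq> k \<longrightarrow> L ! i > c"
proof -
  define S where "S = sort L"
  have sS: "sorted S" and lS: "length S = N" unfolding S_def using len by auto
  then obtain s0 t where St: "S = s0 # t" using N by (cases S) auto
  have "\<forall>x\<in>set t. \<not> x \<le> c"
  proof
    fix x assume "x \<in> set t"
    then obtain j where j: "j < length t" and x: "x = t ! j" by (auto simp: in_set_conv_nth)
    have "S ! 1 \<le> S ! (Suc j)" using sS lS j St by (intro sorted_nth_mono) auto
    thus "\<not> x \<le> c" using gt x St unfolding S_def[symmetric] by auto
  qed
  hence "filter (\<lambda>x. x \<le> c) t = []" by (simp add: filter_empty_conv)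
  hence "length (filter (\<lambda>x. x \<le> c) S) \<le> 1" using St by auto
  also have "filter (\<lambda>x. x \<le> c) S = sort (filter (\<lambda>x. x \<le> c) L)" unfolding S_def by (simp add: filter_sort)
  finally have "length (filter (\<lambda>x. x \<le> c) L) \<le> 1" by simp
  hence cd: "card {i. i < N \<and> L ! i \<le> c} \<le> 1" using len by (simp add: length_filter_conv_card)
  show ?thesis
  proof (cases "{i. i < N \<and> L ! i \<le> c} = {}")
    case True thus ?thesis using N by (intro exI[of _ 0]) auto
  next
    case False
    then obtain k where k: "k < N" "L ! k \<le> c" by auto
    have "\<forall>i<N. i \<noteq> k \<longrightarrow> L ! i > c"
    proof (intro allI impI)
      fix i assume i: "i < N" "i \<noteq> k"
      show "L ! i > c"
      proof (rule ccontr)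
        assume "\<not> L ! i > c"
        hence "{i, k} \<subseteq> {i. i < N \<and> L ! i \<le> c}" using i k by auto
        from card_mono[OF _ this] have "card {i,k} \<le> 1" using cd by auto
        thus False using i by simp
      qed
    qed
    thus ?thesis using k by auto
  qed
qed


lemma vnorm2_sq: "(vnorm2 v)\<^sup>2 = (\<Sum>i<dim_vec v. (cmod (v $ i))\<^sup>2)"
  unfolding vnorm2_def by (simp add: sum_nonneg)

lemma cinner_re: "Re (v \<bullet>c v) = (\<Sum>i<dim_vec v. (cmod (v $ i))\<^sup>2)"
proof -
  have "Re (v \<bullet>c v) = (\<Sum>i<dim_vec v. Re (v $ i * cnj (v $ i)))"
    by (simp add: scalar_prod_def atLeast0LessThan Re_sum)
  also have "\<dots> = (\<Sum>i<dim_vec v. (cmod (v $ i))\<^sup>2)"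
    by (rule sum.cong, simp, metis Re_complex_of_real complex_norm_square)
  finally show ?thesis .
qed

lemma vnorm2_nonneg: "vnorm2 v \<ge> 0" unfolding vnorm2_def by (simp add: sum_nonneg)

lemma vnorm2_smult: "vnorm2 (s \<cdot>\<^sub>v v) = cmod s * vnorm2 v"
proof -
  have "(\<Sum>i<dim_vec v. (cmod (s * v $ i))\<^sup>2) = (cmod s)\<^sup>2 * (\<Sum>i<dim_vec v. (cmod (v $ i))\<^sup>2)"
    by (simp add: sum_distrib_left norm_mult power_mult_distrib)
  thus ?thesis unfolding vnorm2_def by (simp add: real_sqrt_mult)
qed

lemma vnorm2_uminus: "vnorm2 (- v) = vnorm2 v"
  unfolding vnorm2_def by simp

lemma vnorm2_comp_le: assumes "i < dim_vec x" shows "cmod (x $ i) \<le> vnorm2 x"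
proof -
  have "(cmod (x $ i))\<^sup>2 \<le> (\<Sum>j<dim_vec x. (cmod (x $ j))\<^sup>2)"
    using assms by (intro member_le_sum) auto
  thus ?thesis unfolding vnorm2_def by (simp add: real_le_rsqrt)
qed

lemma mat_vec_bound: assumes M: "M \<in> carrier_mat r c" and x: "x \<in> carrier_vec c" and x1: "vnorm2 x = 1"
  shows "vnorm2 (M *\<^sub>v x) \<le> sqrt (\<Sum>i<r. (\<Sum>j<c. cmod (M $$ (i,j)))\<^sup>2)"
proof -
  have xi: "\<And>j. j < c \<Longrightarrow> cmod (x $ j) \<le> 1" using vnorm2_comp_le[of _ x] x x1 by auto
  have "\<And>i. i < r \<Longrightarrow> cmod ((M *\<^sub>v x) $ i) \<le> (\<Sum>j<c. cmod (M $$ (i,j)))"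
  proof -
    fix i assume i: "i < r"
    have "cmod ((M *\<^sub>v x) $ i) = cmod (\<Sum>j<c. M $$ (i,j) * x $ j)"
      using M x i by (simp add: scalar_prod_def atLeast0LessThan)
    also have "\<dots> \<le> (\<Sum>j<c. cmod (M $$ (i,j) * x $ j))" by (rule norm_sum)
    also have "\<dots> \<le> (\<Sum>j<c. cmod (M $$ (i,j)))"
      by (rule sum_mono) (use xi in \<open>auto simp: norm_mult intro: mult_left_le\<close>)
    finally show "cmod ((M *\<^sub>v x) $ i) \<le> (\<Sum>j<c. cmod (M $$ (i,j)))" .
  qed
  hence "(\<Sum>i<r. (cmod ((M *\<^sub>v x) $ i))\<^sup>2) \<le> (\<Sum>i<r. (\<Sum>j<c. cmod (M $$ (i,j)))\<^sup>2)"
    by (intro sum_mono power_mono) auto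
  thus ?thesis unfolding vnorm2_def using M by simp
qed

lemma spec_norm_upper: assumes M: "M \<in> carrier_mat r c" and x: "x \<in> carrier_vec c" and x1: "vnorm2 x = 1"
  shows "vnorm2 (M *\<^sub>v x) \<le> spec_norm M"
  unfolding spec_norm_def
proof (rule cSup_upper)
  show "vnorm2 (M *\<^sub>v x) \<in> {vnorm2 (M *\<^sub>v x) |x. x \<in> carrier_vec (dim_col M) \<and> vnorm2 x = 1}"
    using M x x1 by auto
  show "bdd_above {vnorm2 (M *\<^sub>v x) |x. x \<in> carrier_vec (dim_col M) \<and> vnorm2 x = 1}"
    using mat_vec_bound[OF M] M by (intro bdd_aboveI[of _ "sqrt (\<Sum>i<r. (\<Sum>j<c. cmod (M $$ (i,j)))\<^sup>2)"]) auto
qed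

lemma spec_norm_le: assumes M: "M \<in> carrier_mat r c" and x: "x \<in> carrier_vec c" and x0: "vnorm2 x > 0"
  shows "vnorm2 (M *\<^sub>v x) \<le> spec_norm M * vnorm2 x"
proof -
  define s where "s = complex_of_real (1 / vnorm2 x)"
  have "vnorm2 (s \<cdot>\<^sub>v x) = 1" unfolding vnorm2_smult s_def using x0 by (simp add: norm_divide)
  from spec_norm_upper[OF M _ this] x have "vnorm2 (M *\<^sub>v (s \<cdot>\<^sub>v x)) \<le> spec_norm M" by simp
  also have "M *\<^sub>v (s \<cdot>\<^sub>v x) = s \<cdot>\<^sub>v (M *\<^sub>v x)" by (rule mult_mat_vec[OF M x])
  finally have "(1 / vnorm2 x) * vnorm2 (M *\<^sub>v x) \<le> spec_norm M"
    unfolding vnorm2_smult s_def using x0 by (simp add: norm_divide)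
  thus ?thesis using x0 by (simp add: field_simps)
qed


lemma Fmat_carrier: assumes "R mu1 \<in> carrier_mat n n" "R mu2 \<in> carrier_mat n n"
  shows "Fmat n R mu1 mu2 g \<in> carrier_mat (n+n) (n+n)"
  unfolding Fmat_def using assms by (intro four_block_carrier_mat) auto

lemma Fmat_add: assumes "R1 mu1 \<in> carrier_mat n n" "R1 mu2 \<in> carrier_mat n n"
   "R2 mu1 \<in> carrier_mat n n" "R2 mu2 \<in> carrier_mat n n"
  shows "Fmat n (\<lambda>l. R1 l + R2 l) mu1 mu2 g = Fmat n R1 mu1 mu2 g + Fmat n R2 mu1 mu2 g"
  using assms unfolding Fmat_def divdiff_def
  by (intro eq_matI) (auto simp: algebra_simps)
lemma mv_zero[simp]: "A \<in> carrier_mat r c \<Longrightarrow> A *\<^sub>v 0\<^sub>v c = (0\<^sub>v r :: 'a :: comm_ring_1 vec)"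
  by (intro eq_vecI) (auto simp: scalar_prod_def)
lemma zm_v[simp]: "v \<in> carrier_vec c \<Longrightarrow> 0\<^sub>m r c *\<^sub>v v = (0\<^sub>v r :: 'a :: comm_ring_1 vec)"
  by (intro eq_vecI) (auto simp: scalar_prod_def)

lemma dd_carrier: assumes "Q mu2 \<in> carrier_mat n n"
  shows "g \<cdot>\<^sub>m divdiff Q mu1 mu2 \<in> carrier_mat n n"
  unfolding divdiff_def by (intro smult_carrier_mat minus_carrier_mat assms)

lemma Fmat_ker1: assumes Q: "Q mu1 \<in> carrier_mat n n" "Q mu2 \<in> carrier_mat n n"
  and x2: "x2 \<in> carrier_vec n" "Q mu2 *\<^sub>v x2 = 0\<^sub>v n"
  shows "Fmat n Q mu1 mu2 g *\<^sub>v (0\<^sub>v n @\<^sub>v x2) = 0\<^sub>v (n+n)"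
proof -
  have dd: "g \<cdot>\<^sub>m divdiff Q mu1 mu2 \<in> carrier_mat n n" unfolding divdiff_def using Q by (intro smult_carrier_mat minus_carrier_mat)
  have "Fmat n Q mu1 mu2 g *\<^sub>v (0\<^sub>v n @\<^sub>v x2) =
    (Q mu1 *\<^sub>v 0\<^sub>v n + 0\<^sub>m n n *\<^sub>v x2) @\<^sub>v ((g \<cdot>\<^sub>m divdiff Q mu1 mu2) *\<^sub>v 0\<^sub>v n + Q mu2 *\<^sub>v x2)"
    unfolding Fmat_def by (rule four_block_mat_mult_vec[OF Q(1) zero_carrier_mat dd Q(2) zero_carrier_vec x2(1)])
  also have "\<dots> = 0\<^sub>v n @\<^sub>v 0\<^sub>v n"
    unfolding mv_zero[OF Q(1)] zm_v[OF x2(1)] mv_zero[OF dd] x2(2) by simp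
  also have "\<dots> = 0\<^sub>v (n+n)" by (intro eq_vecI) auto
  finally show ?thesis .
qed
lemma Fmat_ker2: assumes Q: "Q mu1 \<in> carrier_mat n n" "Q mu2 \<in> carrier_mat n n"
  and x1: "x1 \<in> carrier_vec n" "Q mu1 *\<^sub>v x1 = 0\<^sub>v n" and mu: "mu1 \<noteq> mu2"
  shows "Fmat n Q mu1 mu2 g *\<^sub>v (x1 @\<^sub>v ((g / (mu1 - mu2)) \<cdot>\<^sub>v x1)) = 0\<^sub>v (n+n)"
proof -
  let ?c = "g / (mu1 - mu2)"
  have dd: "g \<cdot>\<^sub>m divdiff Q mu1 mu2 \<in> carrier_mat n n" unfolding divdiff_def using Q by (intro smult_carrier_mat minus_carrier_mat)
  have cx: "?c \<cdot>\<^sub>v x1 \<in> carrier_vec n" using x1(1) by simp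
  have "Fmat n Q mu1 mu2 g *\<^sub>v (x1 @\<^sub>v (?c \<cdot>\<^sub>v x1)) =
    (Q mu1 *\<^sub>v x1 + 0\<^sub>m n n *\<^sub>v (?c \<cdot>\<^sub>v x1)) @\<^sub>v ((g \<cdot>\<^sub>m divdiff Q mu1 mu2) *\<^sub>v x1 + Q mu2 *\<^sub>v (?c \<cdot>\<^sub>v x1))"
    unfolding Fmat_def by (rule four_block_mat_mult_vec[OF Q(1) zero_carrier_mat dd Q(2) x1(1) cx])
  also have "(g \<cdot>\<^sub>m divdiff Q mu1 mu2) *\<^sub>v x1 + Q mu2 *\<^sub>v (?c \<cdot>\<^sub>v x1) = 0\<^sub>v n"
  proof (rule eq_vecI)
    fix i assume "i < dim_vec (0\<^sub>v n :: complex vec)"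
    hence i: "i < n" by simp
    have z: "(\<Sum>j\<in>{0..<n}. Q mu1 $$ (i,j) * x1 $ j) = 0"
      using arg_cong[OF x1(2), of "\<lambda>v. v $ i"] Q x1(1) i by (simp add: scalar_prod_def)
    have "((g \<cdot>\<^sub>m divdiff Q mu1 mu2) *\<^sub>v x1 + Q mu2 *\<^sub>v (?c \<cdot>\<^sub>v x1)) $ i
      = (\<Sum>j\<in>{0..<n}. g * (1 / (mu1 - mu2) * (Q mu1 $$ (i,j) - Q mu2 $$ (i,j))) * x1 $ j)
        + (\<Sum>j\<in>{0..<n}. Q mu2 $$ (i,j) * (?c * x1 $ j))"
      using Q x1 i by (simp add: divdiff_def scalar_prod_def)
    also have "\<dots> = ?c * (\<Sum>j\<in>{0..<n}. Q mu1 $$ (i,j) * x1 $ j)"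
      by (simp add: sum_distrib_left sum_subtractf[symmetric] sum.distrib[symmetric] algebra_simps)
    also have "\<dots> = 0" using z by simp
    finally show "((g \<cdot>\<^sub>m divdiff Q mu1 mu2) *\<^sub>v x1 + Q mu2 *\<^sub>v (?c \<cdot>\<^sub>v x1)) $ i = 0\<^sub>v n $ i"
      using i by simp
  qed (use Q in auto)
  also have "Q mu1 *\<^sub>v x1 + 0\<^sub>m n n *\<^sub>v (?c \<cdot>\<^sub>v x1) = 0\<^sub>v n"
    unfolding x1(2) zm_v[OF cx] by simp
  also have "0\<^sub>v n @\<^sub>v 0\<^sub>v n = (0\<^sub>v (n+n) :: complex vec)" by (intro eq_vecI) auto
  finally show ?thesis .
qed

lemma nonzero_index: assumes "v \<in> carrier_vec k" "v \<noteq> 0\<^sub>v k" shows "\<exists>j<k. v $ j \<noteq> 0"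
proof (rule ccontr)
  assume "\<not> ?thesis"
  hence "v = 0\<^sub>v k" using assms(1) by (intro eq_vecI) auto
  with assms(2) show False by simp
qed

lemma mpoly_carrier[simp]: "mpoly_eval n m C lam \<in> carrier_mat n n"
  unfolding mpoly_eval_def by simp

lemma diag_mult_vec: assumes Dg: "Dg \<in> carrier_mat N N" and dD: "diagonal_mat Dg"
  and y: "y \<in> carrier_vec N" and i: "i < N"
  shows "(Dg *\<^sub>v y) $ i = Dg $$ (i,i) * y $ i"
proof -
  have "(Dg *\<^sub>v y) $ i = (\<Sum>j\<in>{0..<N}. Dg $$ (i,j) * y $ j)"
    using Dg y i by (simp add: scalar_prod_def)
  also have "\<dots> = (\<Sum>j\<in>{0..<N}. if j = i then Dg $$ (i,i) * y $ j else 0)"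
    using dD Dg i unfolding diagonal_mat_def by (intro sum.cong) auto
  also have "\<dots> = Dg $$ (i,i) * y $ i" using i by simp
  finally show ?thesis .
qed

lemma diag_quad: assumes Dg: "Dg \<in> carrier_mat N N" and dD: "diagonal_mat Dg"
  and y: "y \<in> carrier_vec N"
  shows "y \<bullet>c (Dg *\<^sub>v y) = (\<Sum>i\<in>{0..<N}. cnj (Dg $$ (i,i)) * (y $ i * cnj (y $ i)))"
proof -
  have "y \<bullet>c (Dg *\<^sub>v y) = (\<Sum>i\<in>{0..<N}. y $ i * cnj ((Dg *\<^sub>v y) $ i))"
    using Dg y by (simp add: scalar_prod_def del: index_mult_mat_vec)
  also have "\<dots> = (\<Sum>i\<in>{0..<N}. cnj (Dg $$ (i,i)) * (y $ i * cnj (y $ i)))"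
    by (intro sum.cong) (auto simp: diag_mult_vec[OF Dg dD y])
  finally show ?thesis .
qed

lemma cmod_sq_complex: "z * cnj z = complex_of_real ((cmod z)\<^sup>2)"
  by (metis complex_norm_square)
theorem lemma2:
  fixes n m :: nat and A D :: "nat \<Rightarrow> complex mat" and mu1 mu2 gamma :: complex
  assumes "\<And>j. j \<le> m \<Longrightarrow> A j \<in> carrier_mat n n"
    and "\<And>j. j \<le> m \<Longrightarrow> D j \<in> carrier_mat n n"
    and "mu1 \<noteq> mu2"
    and "is_mp_eigenvalue n (\<lambda>lam. mpoly_eval n m A lam + mpoly_eval n m D lam) mu1"
    and "is_mp_eigenvalue n (\<lambda>lam. mpoly_eval n m A lam + mpoly_eval n m D lam) mu2"
    and "gamma \<noteq> 0"
  shows "sval (2 * n - 1) (Fmat n (mpoly_eval n m A) mu1 mu2 gamma)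
           \<le> spec_norm (Fmat n (mpoly_eval n m D) mu1 mu2 gamma)"
proof -
  define P where "P = mpoly_eval n m A"
  define Dl where "Dl = mpoly_eval n m D"
  define Q where "Q = (\<lambda>lam. P lam + Dl lam)"
  define N where "N = n + n"
  have Pc: "\<And>l. P l \<in> carrier_mat n n" and Dc: "\<And>l. Dl l \<in> carrier_mat n n"
    unfolding P_def Dl_def by auto
  have Qc: "\<And>l. Q l \<in> carrier_mat n n" unfolding Q_def using Pc Dc by auto
  from assms(4) obtain x1 where x1: "x1 \<in> carrier_vec n" "x1 \<noteq> 0\<^sub>v n" "Q mu1 *\<^sub>v x1 = 0\<^sub>v n"
    unfolding is_mp_eigenvalue_def Q_def P_def Dl_def by auto
  from assms(5) obtain x2 where x2: "x2 \<in> carrier_vec n" "x2 \<noteq> 0\<^sub>v n" "Q mu2 *\<^sub>v x2 = 0\<^sub>v n"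
    unfolding is_mp_eigenvalue_def Q_def P_def Dl_def by auto
  have n0: "n \<noteq> 0"
  proof
    assume "n = 0"
    hence "x1 = 0\<^sub>v n" using x1(1) by (intro eq_vecI) auto
    with x1(2) show False by simp
  qed
  define F where "F = Fmat n P mu1 mu2 gamma"
  define G where "G = Fmat n Dl mu1 mu2 gamma"
  define FQ where "FQ = Fmat n Q mu1 mu2 gamma"
  have F: "F \<in> carrier_mat N N" unfolding F_def N_def by (rule Fmat_carrier) (use Pc in auto)
  have G: "G \<in> carrier_mat N N" unfolding G_def N_def by (rule Fmat_carrier) (use Dc in auto)
  have FQ: "FQ = F + G" unfolding FQ_def F_def G_def Q_def by (rule Fmat_add) (use Pc Dc in auto)
  define c0 where "c0 = gamma / (mu1 - mu2)"
  define a where "a = 0\<^sub>v n @\<^sub>v x2"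
  define b where "b = x1 @\<^sub>v (c0 \<cdot>\<^sub>v x1)"
  have a: "a \<in> carrier_vec N" and b: "b \<in> carrier_vec N" unfolding a_def b_def N_def using x1 x2 by auto
  have FQa: "FQ *\<^sub>v a = 0\<^sub>v N" unfolding FQ_def a_def N_def by (rule Fmat_ker1) (use Qc x2 in auto)
  have FQb: "FQ *\<^sub>v b = 0\<^sub>v N" unfolding FQ_def b_def N_def c0_def by (rule Fmat_ker2) (use Qc x1 assms(3) in auto)
  define H where "H = cadj F * F"
  have H: "H \<in> carrier_mat N N" unfolding H_def using F by auto
  have hH: "cadj H = H" unfolding H_def using F by (simp add: cadj_mult[of _ N N _ N])
  from hermitian_spectral[OF H hH] obtain U Dg where U: "U \<in> carrier_mat N N" and Dg: "Dg \<in> carrier_mat N N"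
    and dD: "diagonal_mat Dg" and UU: "cadj U * U = 1\<^sub>m N" and HU: "H = U * Dg * cadj U" by auto
  have UU': "U * cadj U = 1\<^sub>m N" by (rule unitary_right[OF U UU])
  have cU: "cadj U \<in> carrier_mat N N" using U by simp
  have key: "\<And>y. y \<in> carrier_vec N \<Longrightarrow> (F *\<^sub>v (U *\<^sub>v y)) \<bullet>c (F *\<^sub>v (U *\<^sub>v y)) = y \<bullet>c (Dg *\<^sub>v y)"
  proof -
    fix y :: "complex vec" assume y: "y \<in> carrier_vec N"
    have Uy: "U *\<^sub>v y \<in> carrier_vec N" using U y by simp
    have cUUy: "cadj U *\<^sub>v (U *\<^sub>v y) = y" using U cU y
      by (simp add: assoc_mult_mat_vec[of _ N N _ N, symmetric] UU)
    have "H *\<^sub>v (U *\<^sub>v y) = (U * Dg) *\<^sub>v (cadj U *\<^sub>v (U *\<^sub>v y))" unfolding HU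
      by (rule assoc_mult_mat_vec[OF mult_carrier_mat[OF U Dg] cU Uy])
    also have "\<dots> = U *\<^sub>v (Dg *\<^sub>v y)" unfolding cUUy by (rule assoc_mult_mat_vec[OF U Dg y])
    finally have HUy: "H *\<^sub>v (U *\<^sub>v y) = U *\<^sub>v (Dg *\<^sub>v y)" .
    have "(F *\<^sub>v (U *\<^sub>v y)) \<bullet>c (F *\<^sub>v (U *\<^sub>v y)) = (U *\<^sub>v y) \<bullet>c (cadj F *\<^sub>v (F *\<^sub>v (U *\<^sub>v y)))"
      by (rule cadj_inner[OF F Uy]) (use F Uy in simp)
    also have "cadj F *\<^sub>v (F *\<^sub>v (U *\<^sub>v y)) = H *\<^sub>v (U *\<^sub>v y)" unfolding H_def
      by (rule assoc_mult_mat_vec[symmetric, OF cadj_carrier[OF F] F Uy])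
    also have "\<dots> = U *\<^sub>v (Dg *\<^sub>v y)" by (rule HUy)
    also have "(U *\<^sub>v y) \<bullet>c (U *\<^sub>v (Dg *\<^sub>v y)) = y \<bullet>c (cadj U *\<^sub>v (U *\<^sub>v (Dg *\<^sub>v y)))"
      by (rule cadj_inner[OF U y]) (use U Dg y in simp)
    also have "cadj U *\<^sub>v (U *\<^sub>v (Dg *\<^sub>v y)) = Dg *\<^sub>v y"
      by (subst assoc_mult_mat_vec[symmetric, OF cU U mult_mat_vec_carrier[OF Dg y]]) (use UU Dg y in simp)
    finally show "(F *\<^sub>v (U *\<^sub>v y)) \<bullet>c (F *\<^sub>v (U *\<^sub>v y)) = y \<bullet>c (Dg *\<^sub>v y)" .
  qed
  define d where "d = (\<lambda>i. Re (Dg $$ (i,i)))"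
  have dreal: "\<And>i. i < N \<Longrightarrow> Dg $$ (i,i) = complex_of_real (d i) \<and> d i \<ge> 0"
  proof -
    fix i assume i: "i < N"
    define e :: "complex vec" where "e = unit_vec N i"
    have e: "e \<in> carrier_vec N" unfolding e_def by simp
    define w where "w = F *\<^sub>v (U *\<^sub>v e)"
    have "e \<bullet>c (Dg *\<^sub>v e) = cnj (Dg $$ (i,i))"
    proof -
      have "e \<bullet>c (Dg *\<^sub>v e) = (\<Sum>ia\<in>{0..<N}. if ia = i then cnj (Dg $$ (i,i)) else 0)"
        unfolding diag_quad[OF Dg dD e] unfolding e_def using i by (intro sum.cong) auto
      thus ?thesis using i by simp
    qed
    hence "cnj (Dg $$ (i,i)) = w \<bullet>c w" unfolding w_def key[OF e] ..
    hence "cnj (Dg $$ (i,i)) = complex_of_real (Re (w \<bullet>c w)) \<and> Re (w \<bullet>c w) \<ge> 0"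
      using cinner_self[of w] by simp
    note h = this
    show "Dg $$ (i,i) = complex_of_real (d i) \<and> d i \<ge> 0"
    proof -
      have "Dg $$ (i,i) = cnj (complex_of_real (Re (w \<bullet>c w)))" using h by (metis complex_cnj_cnj)
      hence "Dg $$ (i,i) = complex_of_real (Re (w \<bullet>c w))" by simp
      thus ?thesis using h by (simp add: d_def)
    qed
  qed
  have quadRe: "\<And>y. y \<in> carrier_vec N \<Longrightarrow> Re (y \<bullet>c (Dg *\<^sub>v y)) = (\<Sum>i\<in>{0..<N}. d i * (cmod (y $ i))\<^sup>2)"
  proof -
    fix y :: "complex vec" assume y: "y \<in> carrier_vec N"
    have "y \<bullet>c (Dg *\<^sub>v y) = (\<Sum>i\<in>{0..<N}. complex_of_real (d i * (cmod (y $ i))\<^sup>2))"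
      unfolding diag_quad[OF Dg dD y] using dreal by (intro sum.cong) (auto simp: cmod_sq_complex)
    thus "Re (y \<bullet>c (Dg *\<^sub>v y)) = (\<Sum>i\<in>{0..<N}. d i * (cmod (y $ i))\<^sup>2)" by (simp add: Re_sum)
  qed
  have simH: "similar_mat H Dg" unfolding similar_mat_def similar_mat_wit_def
    using H Dg U cU UU UU' HU by (intro exI[of _ U] exI[of _ "cadj U"]) auto
  have utD: "upper_triangular Dg" using dD Dg unfolding diagonal_mat_def upper_triangular_def by auto
  have cpH: "char_poly H = (\<Prod>a\<leftarrow>diag_mat Dg. [:- a, 1:])"
    unfolding char_poly_similar[OF simH] by (rule char_poly_upper_triangular[OF Dg utD])
  define L where "L = map (\<lambda>z. sqrt (Re z)) (diag_mat Dg)"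
  have lenL: "length L = N" unfolding L_def diag_mat_def using Dg by simp
  have Li: "\<And>i. i < N \<Longrightarrow> L ! i = sqrt (d i)" unfolding L_def diag_mat_def d_def using Dg by simp
  have sv: "sing_vals F = rev (sort L)"
    unfolding sing_vals_def H_def[symmetric] cpH proots_linear_prod L_def
    by (simp flip: mset_map)
  have svF: "sval (2 * n - 1) F = sort L ! 1"
  proof -
    have e2: "2 * n - 1 - 1 = 2 * n - 2" by simp
    have "sval (2 * n - 1) F = rev (sort L) ! (2 * n - 2)" unfolding sval_def sv e2 ..
    also have "\<dots> = sort L ! (length (sort L) - Suc (2 * n - 2))"
      by (rule rev_nth) (use lenL n0 N_def in simp)
    also have "length (sort L) - Suc (2 * n - 2) = 1" using lenL n0 unfolding N_def by simp
    finally show ?thesis .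
  qed
  show ?thesis
  proof (rule ccontr)
    assume "\<not> ?thesis"
    hence gt: "sort L ! 1 > spec_norm G" using svF unfolding F_def G_def P_def Dl_def by simp
    define c where "c = spec_norm G"
    from list_second[OF lenL _ gt] n0 obtain k where k: "k < N" and kk: "\<And>i. i < N \<Longrightarrow> i \<noteq> k \<Longrightarrow> L ! i > c"
      unfolding N_def c_def by auto
    define u where "u = col U k"
    have u: "u \<in> carrier_vec N" unfolding u_def using U k by simp
    define al where "al = b \<bullet>c u"
    define be where "be = a \<bullet>c u"
    define x where "x = (if al = 0 \<and> be = 0 then a else al \<cdot>\<^sub>v a - be \<cdot>\<^sub>v b)"
    have x: "x \<in> carrier_vec N" unfolding x_def using a b by auto
    have xeq: "\<not> (al = 0 \<and> be = 0) \<Longrightarrow> x = al \<cdot>\<^sub>v a - be \<cdot>\<^sub>v b" unfolding x_def by (rule if_not_P)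
    have xu: "x \<bullet>c u = 0"
    proof (cases "al = 0 \<and> be = 0")
      case True thus ?thesis unfolding x_def be_def by simp
    next
      case False
      have "x \<bullet>c u = al * (a \<bullet>c u) - be * (b \<bullet>c u)" unfolding xeq[OF False] using a b u
        by (simp add: scalar_prod_def sum_subtractf sum_distrib_left algebra_simps)
      thus ?thesis unfolding al_def be_def by simp
    qed
    have x0: "x \<noteq> 0\<^sub>v N"
    proof (cases "al = 0 \<and> be = 0")
      case True
      obtain j where j: "j < n" "x2 $ j \<noteq> 0" using nonzero_index[OF x2(1) x2(2)] by auto
      have "x $ (n + j) \<noteq> 0" unfolding x_def a_def using True j x2 by simp
      thus ?thesis using j unfolding N_def by auto
    next
      case False
      show ?thesis
      proof (cases "be = 0")
        case True
        hence al0: "al \<noteq> 0" using False by simp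
        obtain j where j: "j < n" "x2 $ j \<noteq> 0" using nonzero_index[OF x2(1) x2(2)] by auto
        have "x $ (n + j) = al * x2 $ j" unfolding xeq[OF False] a_def b_def using True j x2 x1 by simp
        hence "x $ (n + j) \<noteq> 0" using al0 j by simp
        thus ?thesis using j unfolding N_def by auto
      next
        case be0: False
        obtain j where j: "j < n" "x1 $ j \<noteq> 0" using nonzero_index[OF x1(1) x1(2)] by auto
        have "x $ j = - (be * x1 $ j)" unfolding xeq[OF False] a_def b_def using j x2 x1 by simp
        hence "x $ j \<noteq> 0" using be0 j by simp
        thus ?thesis using j unfolding N_def by auto
      qed
    qed
    have FQx: "FQ *\<^sub>v x = 0\<^sub>v N"
    proof (cases "al = 0 \<and> be = 0")
      case True thus ?thesis unfolding x_def using FQa by simp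
    next
      case False
      have FQc: "FQ \<in> carrier_mat N N" unfolding FQ using F G by simp
      have "FQ *\<^sub>v x = al \<cdot>\<^sub>v (FQ *\<^sub>v a) - be \<cdot>\<^sub>v (FQ *\<^sub>v b)" unfolding xeq[OF False] using FQc a b
        by (simp add: mult_minus_distrib_mat_vec[of _ N N] mult_mat_vec[of _ N N])
      thus ?thesis unfolding FQa FQb by (intro eq_vecI) auto
    qed
    have Fx: "F *\<^sub>v x = - (G *\<^sub>v x)"
    proof (rule eq_vecI)
      fix i assume "i < dim_vec (- (G *\<^sub>v x))"
      hence i: "i < N" using G by simp
      have "(FQ *\<^sub>v x) $ i = 0" using FQx i by simp
      hence "(F *\<^sub>v x) $ i + (G *\<^sub>v x) $ i = 0" unfolding FQ using F G x i
        by (simp add: add_mult_distrib_mat_vec[of _ N N])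
      thus "(F *\<^sub>v x) $ i = (- (G *\<^sub>v x)) $ i" using i G by (simp add: eq_neg_iff_add_eq_0)
    qed (use F G in simp)
    define y where "y = cadj U *\<^sub>v x"
    have y: "y \<in> carrier_vec N" unfolding y_def using cU x by simp
    have xUy: "x = U *\<^sub>v y" unfolding y_def using U cU x by (simp add: assoc_mult_mat_vec[of _ N N _ N, symmetric] UU')
    have yk: "y $ k = 0"
    proof -
      have "y $ k = (\<Sum>j\<in>{0..<N}. cnj (U $$ (j,k)) * x $ j)" unfolding y_def using U x k
        by (simp add: scalar_prod_def)
      also have "\<dots> = x \<bullet>c u" unfolding u_def using U x k by (simp add: scalar_prod_def mult.commute)
      finally show ?thesis using xu by simp
    qed
    have y0: "y \<noteq> 0\<^sub>v N"
    proof
      assume "y = 0\<^sub>v N" hence "x = 0\<^sub>v N" using xUy U by simp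
      with x0 show False by simp
    qed
    then obtain j where j: "j < N" "y $ j \<noteq> 0" using nonzero_index[OF y y0] by auto
    have nx2: "(vnorm2 x)\<^sup>2 = (\<Sum>i\<in>{0..<N}. (cmod (y $ i))\<^sup>2)"
    proof -
      have "x \<bullet>c x = y \<bullet>c (cadj U *\<^sub>v (U *\<^sub>v y))" unfolding xUy by (rule cadj_inner[OF U y]) (use U y in simp)
      also have "cadj U *\<^sub>v (U *\<^sub>v y) = y" using U cU y
        by (simp add: assoc_mult_mat_vec[of _ N N _ N, symmetric] UU)
      finally have "Re (x \<bullet>c x) = Re (y \<bullet>c y)" by simp
      thus ?thesis unfolding vnorm2_sq cinner_re using x y by (simp add: atLeast0LessThan)
    qed
    have nFx2: "(vnorm2 (F *\<^sub>v x))\<^sup>2 = (\<Sum>i\<in>{0..<N}. d i * (cmod (y $ i))\<^sup>2)"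
    proof -
      have "Re ((F *\<^sub>v x) \<bullet>c (F *\<^sub>v x)) = (\<Sum>i\<in>{0..<N}. d i * (cmod (y $ i))\<^sup>2)"
        unfolding xUy key[OF y] quadRe[OF y] ..
      thus ?thesis unfolding vnorm2_sq cinner_re .
    qed
    have xpos: "vnorm2 x > 0"
    proof -
      have "(cmod (y $ j))\<^sup>2 > 0" using j by simp
      hence "(\<Sum>i\<in>{0..<N}. (cmod (y $ i))\<^sup>2) > 0" using j by (intro sum_pos2[of _ j]) auto
      hence "(vnorm2 x)\<^sup>2 > 0" unfolding nx2 .
      thus ?thesis using vnorm2_nonneg[of x] by (simp add: zero_less_power2 less_le)
    qed
    have le: "vnorm2 (F *\<^sub>v x) \<le> c * vnorm2 x" unfolding Fx vnorm2_uminus c_def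
      by (rule spec_norm_le[OF G x xpos])
    have c0': "c \<ge> 0" using le xpos vnorm2_nonneg[of "F *\<^sub>v x"]
    proof -
      have "0 \<le> c * vnorm2 x" using le vnorm2_nonneg[of "F *\<^sub>v x"] by linarith
      thus ?thesis using xpos by (simp add: zero_le_mult_iff)
    qed
    have "(vnorm2 (F *\<^sub>v x))\<^sup>2 \<le> (c * vnorm2 x)\<^sup>2" by (rule power_mono[OF le vnorm2_nonneg])
    hence le2: "(\<Sum>i\<in>{0..<N}. d i * (cmod (y $ i))\<^sup>2) \<le> (\<Sum>i\<in>{0..<N}. c\<^sup>2 * (cmod (y $ i))\<^sup>2)"
      unfolding nFx2 power_mult_distrib nx2 by (simp add: sum_distrib_left)
    have dgt: "\<And>i. i < N \<Longrightarrow> i \<noteq> k \<Longrightarrow> d i > c\<^sup>2"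
    proof -
      fix i assume "i < N" "i \<noteq> k"
      hence s: "sqrt (d i) > c" using kk Li by fastforce
      have "c\<^sup>2 < (sqrt (d i))\<^sup>2" using s c0' by (intro power_strict_mono) auto
      thus "d i > c\<^sup>2" using dreal \<open>i < N\<close> by simp
    qed
    have "(\<Sum>i\<in>{0..<N}. c\<^sup>2 * (cmod (y $ i))\<^sup>2) < (\<Sum>i\<in>{0..<N}. d i * (cmod (y $ i))\<^sup>2)"
    proof (rule sum_strict_mono_ex1)
      show "\<forall>i\<in>{0..<N}. c\<^sup>2 * (cmod (y $ i))\<^sup>2 \<le> d i * (cmod (y $ i))\<^sup>2"
      proof
        fix i assume i: "i \<in> {0..<N}"
        show "c\<^sup>2 * (cmod (y $ i))\<^sup>2 \<le> d i * (cmod (y $ i))\<^sup>2"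
        proof (cases "i = k")
          case True thus ?thesis using yk by simp
        next
          case False thus ?thesis using dgt[of i] i by (intro mult_right_mono) auto
        qed
      qed
      have jk: "j \<noteq> k" using j yk by auto
      show "\<exists>i\<in>{0..<N}. c\<^sup>2 * (cmod (y $ i))\<^sup>2 < d i * (cmod (y $ i))\<^sup>2"
        using j jk dgt[of j] by (intro bexI[of _ j]) auto
    qed simp
    with le2 show False by simp
  qed
qed
end
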